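(* Let $h\ge 2$ and let $p_1,\dots,p_h$ be primes with $p_i\neq p_{i+1}$ for $i=1,\dots,h-1$. Then there are $\mathrm{CC}[p_1;\dots;p_h]$-circuits of size $2^{O(n^{1/(h-1)})}$ computing the $n$-ary conjunction $\mathrm{AND}_n$.
   Context: For an integer $m\ge 1$ and $A\subseteq\{0,\dots,m-1\}$, a gate $\mathrm{MOD}_m^A$ takes finitely many Boolean inputs (counted with multiplicity, as a wire may be connected several times) and outputs $1$ if their sum modulo $m$ lies in $A$, and $0$ otherwise. A $\mathrm{CC}[m_1;\dots;m_h]$-circuit is a Boolean circuit of depth $h$ in which every gate on level $i$ (level $1$ being fed by the inputs and level $h$ containing the output gate) is of the form $\mathrm{MOD}_{m_i}^A$ for some $A$ (possibly different for each gate), with multiple wires allowed. The size of a circuit is its number of gates. *)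

theory Defs
  imports Complex_Main "HOL-Computational_Algebra.Primes"
begin

text \<open>A MOD gate is given by its accepting set A and a multiplicity function w:
 w j is the number of wires from the j-th node of the previous level
 (the input variables, for level 1).\<close>
type_synonym gate = "nat set \<times> (nat \<Rightarrow> nat)"

definition eval_gate :: "nat \<Rightarrow> gate \<Rightarrow> bool list \<Rightarrow> bool" where
  "eval_gate m g vals =
     ((\<Sum>j<length vals. snd g j * (if vals ! j then 1 else 0)) mod m \<in> fst g)"

fun eval_levels :: "nat list \<Rightarrow> gate list list \<Rightarrow> bool list \<Rightarrow> bool list" where
  "eval_levels (m # ms) (L # Ls) vals = eval_levels ms Ls (map (\<lambda>g. eval_gate m g vals) L)"
| "eval_levels _ _ vals = vals"

definition is_CC_circuit :: "nat list \<Rightarrow> gate list list \<Rightarrow> bool" where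
  "is_CC_circuit ms C \<longleftrightarrow> length C = length ms \<and> C \<noteq> [] \<and>
     (\<forall>i<length C. C ! i \<noteq> [] \<and> (\<forall>g\<in>set (C ! i). fst g \<subseteq> {..<ms ! i})) \<and>
     length (last C) = 1"

definition circuit_size :: "gate list list \<Rightarrow> nat" where
  "circuit_size C = (\<Sum>L\<leftarrow>C. length L)"

definition circuit_output :: "nat list \<Rightarrow> gate list list \<Rightarrow> bool list \<Rightarrow> bool" where
  "circuit_output ms C x = hd (eval_levels ms C x)"

definition computes_AND :: "nat list \<Rightarrow> gate list list \<Rightarrow> nat \<Rightarrow> bool" where
  "computes_AND ms C n \<longleftrightarrow>
     (\<forall>x::bool list. length x = n \<longrightarrow> circuit_output ms C x = (\<forall>b\<in>set x. b))"

end

theory Submission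
  imports Defs "HOL-Number_Theory.Cong"
begin


lemma sum_split:
  fixes g :: "nat \<Rightarrow> 'a::comm_monoid_add"
  shows "(\<Sum>j<M*K. g j) = (\<Sum>b<M. \<Sum>r<K. g (b*K + r))"
proof -
  have "(\<Sum>j<M*K. g j) = (\<Sum>b<M. sum g {b*K..<b*K+K})"
    using sum.nat_group[of g K M] by simp
  also have "\<dots> = (\<Sum>b<M. \<Sum>r<K. g (b*K + r))"
  proof (rule sum.cong[OF refl])
    fix b
    show "sum g {b*K..<b*K+K} = (\<Sum>r<K. g (b*K + r))"
    proof -
      have "sum g {0 + b*K..<K + b*K} = (\<Sum>r\<in>{0..<K}. g (r + b*K))" by (rule sum.shift_bounds_nat_ivl)
      thus ?thesis by (simp add: atLeast0LessThan add.commute)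
    qed
  qed
  finally show ?thesis .
qed

definition dig :: "nat \<Rightarrow> nat \<Rightarrow> nat \<Rightarrow> nat" where "dig Q e r = e div Q ^ r mod Q"

lemma dig0: "Q > 0 \<Longrightarrow> d < Q \<Longrightarrow> dig Q (c*Q + d) 0 = d"
  by (simp add: dig_def)

lemma digSuc: "Q > 0 \<Longrightarrow> d < Q \<Longrightarrow> dig Q (c*Q + d) (Suc r) = dig Q c r"
  by (simp add: dig_def div_mult2_eq mult.commute)

lemma count:
  assumes Q: "Q > 0"
  shows "a < Q \<Longrightarrow> (\<Sum>c<Q^m. if (\<Sum>r<m. dig Q c r * (if y r then 1 else 0)) mod Q = a then 1 else (0::nat))
     = (if \<exists>r<m. y r then Q^(m-1) else if a = 0 then Q^m else 0)"
proof (induction m arbitrary: y a)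
  case 0
  then show ?case by simp
next
  case (Suc m)
  define s where "s c1 = (\<Sum>r<m. dig Q c1 r * (if y (Suc r) then 1 else 0))" for c1
  define yv where "yv = (if y 0 then 1 else (0::nat))"
  define ad where "ad d = (a + Q - (d*yv) mod Q) mod Q" for d
  have pt: "(\<Sum>r<Suc m. dig Q (c1*Q+d) r * (if y r then 1 else 0)) = d*yv + s c1" if "d<Q" for c1 d
    by (simp only: sum.lessThan_Suc_shift) (simp add: dig0 digSuc Q that s_def yv_def)
  have e1: "(\<Sum>c<Q^Suc m. if (\<Sum>r<Suc m. dig Q c r * (if y r then 1 else 0)) mod Q = a then 1 else (0::nat))
     = (\<Sum>c1<Q^m. \<Sum>d<Q. if (d*yv + s c1) mod Q = a then 1 else 0)"
    unfolding power_Suc2 sum_split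
    by (rule sum.cong[OF refl], rule sum.cong[OF refl])
       (simp del: sum.lessThan_Suc add: pt)
  have e2: "(d*yv + s c1) mod Q = a \<longleftrightarrow> s c1 mod Q = ad d" if "d < Q" for d c1
  proof -
    have "(d*yv + s c1) mod Q = a \<longleftrightarrow> [d*yv + s c1 = a] (mod Q)"
      using Suc.prems by (simp add: cong_def)
    also have "\<dots> \<longleftrightarrow> [(d*yv) mod Q + s c1 = (d*yv) mod Q + ad d] (mod Q)"
    proof -
      define t where "t = d*yv mod Q"
      have tQ: "t < Q" using Q by (simp add: t_def)
      have r1: "(t + (a + Q - t) mod Q) mod Q = a"
      proof -
        have "(t + (a + Q - t) mod Q) mod Q = (t + (a + Q - t)) mod Q" by (simp add: mod_add_right_eq)
        also have "t + (a + Q - t) = a + Q" using tQ by simp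
        finally show ?thesis using Suc.prems by simp
      qed
      have r2: "(t + s c1) mod Q = (d*yv + s c1) mod Q" by (simp add: t_def mod_add_left_eq)
      show ?thesis unfolding cong_def ad_def t_def[symmetric] r1 r2 using Suc.prems by simp
    qed
    also have "\<dots> \<longleftrightarrow> s c1 mod Q = ad d"
    proof -
      have hm: "ad d mod Q = ad d" by (simp add: ad_def)
      have h1: "[(d*yv) mod Q + s c1 = (d*yv) mod Q + ad d] (mod Q) \<longleftrightarrow> [s c1 = ad d] (mod Q)"
        by (rule cong_add_lcancel_nat)
      show ?thesis using h1 hm unfolding cong_def by simp
    qed
    finally show ?thesis .
  qed
  have e3: "(\<Sum>c1<Q^m. \<Sum>d<Q. if (d*yv + s c1) mod Q = a then 1 else (0::nat))
       = (\<Sum>d<Q. \<Sum>c1<Q^m. if s c1 mod Q = ad d then 1 else 0)"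
    by (subst sum.swap) (rule sum.cong[OF refl], rule sum.cong[OF refl], simp add: e2)
  have IH: "(\<Sum>c1<Q^m. if s c1 mod Q = ad d then 1 else (0::nat)) =
     (if \<exists>r<m. y (Suc r) then Q^(m-1) else if ad d = 0 then Q^m else 0)" for d
    using Suc.IH[of "ad d" "\<lambda>r. y (Suc r)"] Q unfolding s_def ad_def by simp
  have E: "(\<Sum>c<Q^Suc m. if (\<Sum>r<Suc m. dig Q c r * (if y r then 1 else 0)) mod Q = a then 1 else (0::nat))
     = (\<Sum>d<Q. if \<exists>r<m. y (Suc r) then Q^(m-1) else if ad d = 0 then Q^m else 0)"
    unfolding e1 e3 IH by (rule refl)
  show ?case
  proof (cases "\<exists>r<m. y (Suc r)")
    case True
    then have "m \<ge> 1" by auto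
    then have q: "Q * Q^(m-1) = Q^m" by (metis power_Suc Suc_diff_le diff_Suc_1)
    have ex: "\<exists>r<Suc m. y r" using True by auto
    have "(\<Sum>d<Q. if \<exists>r<m. y (Suc r) then Q^(m-1) else if ad d = 0 then Q^m else 0) = Q^m"
      using True q by simp
    then show ?thesis using E ex by simp
  next
    case F: False
    have E2: "(\<Sum>c<Q^Suc m. if (\<Sum>r<Suc m. dig Q c r * (if y r then 1 else 0)) mod Q = a then 1 else (0::nat))
     = (\<Sum>d<Q. if ad d = 0 then Q^m else 0)" using E F by simp
    show ?thesis
    proof (cases "y 0")
      case True
      have "ad d = 0 \<longleftrightarrow> d = a" if "d < Q" for d
      proof -
        have ad1: "ad d = (a + Q - d) mod Q" using that True by (simp add: ad_def yv_def)
        show ?thesis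
        proof (cases "d = a")
          case True then show ?thesis using ad1 by simp
        next
          case False
          show ?thesis
          proof (cases "d < a")
            case True
            have eq: "a + Q - d = (a - d) + Q" using True by simp
            have "ad d = (a - d) mod Q" unfolding ad1 eq by (rule mod_add_self2)
            moreover have "a - d < Q" using Suc.prems by linarith
            ultimately have "ad d = a - d" by simp
            then show ?thesis using True by simp
          next
            case False
            then have lt: "a + Q - d < Q" and gt: "a + Q - d > 0" using \<open>d \<noteq> a\<close> that by auto
            have "ad d = a + Q - d" unfolding ad1 using lt by (rule mod_less)
            then show ?thesis using gt \<open>d \<noteq> a\<close> by simp
          qed
        qed
      qed
      then have "(\<Sum>d<Q. if ad d = 0 then Q^m else 0) = (\<Sum>d<Q. if d = a then Q^m else 0)"
        by (intro sum.cong) auto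
      also have "\<dots> = Q^m" using Suc.prems by simp
      finally have "(\<Sum>d<Q. if ad d = 0 then Q^m else 0) = Q^m" .
      moreover have ex: "\<exists>r<Suc m. y r" using True by auto
      ultimately show ?thesis using E2 by simp
    next
      case False
      have ad: "ad d = a" for d using Suc.prems unfolding ad_def yv_def using False by simp
      have nex: "\<not> (\<exists>r<Suc m. y r)" using F False by (metis less_Suc_eq_0_disj)
      have "(\<Sum>d<Q. if ad d = 0 then Q^m else 0) = (if a = 0 then Q^Suc m else 0)"
        unfolding ad by (simp add: mult.commute)
      then show ?thesis unfolding E2 if_not_P[OF nex] .
    qed
  qed
qed



definition zz :: "nat \<Rightarrow> bool list \<Rightarrow> nat \<Rightarrow> nat \<Rightarrow> bool" where
  "zz m x k b = (\<exists>j<length x. j div m ^ k = b \<and> \<not> x ! j)"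

lemma zz_0: "zz m x 0 j = (j < length x \<and> \<not> x ! j)"
  unfolding zz_def by auto

lemma div_eq_iff_ex: "(m::nat) > 0 \<Longrightarrow> (u div m = b) = (\<exists>r<m. u = b*m + r)"
proof
  assume "m > 0" "u div m = b"
  then show "\<exists>r<m. u = b*m + r" by (intro exI[of _ "u mod m"]) (auto simp: mult.commute)
next
  assume "m > 0" "\<exists>r<m. u = b*m + r"
  then show "u div m = b" by auto
qed

lemma zz_Suc: "m > 0 \<Longrightarrow> zz m x (Suc k) b = (\<exists>r<m. zz m x k (b*m + r))"
proof -
  assume m: "m > 0"
  have "j div m ^ Suc k = j div m ^ k div m" for j
    by (simp only: power_Suc2 div_mult2_eq)
  then have "zz m x (Suc k) b = (\<exists>j<length x. (\<exists>r<m. j div m^k = b*m + r) \<and> \<not> x ! j)"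
    unfolding zz_def using div_eq_iff_ex[OF m] by simp
  also have "\<dots> = (\<exists>r<m. zz m x k (b*m + r))" unfolding zz_def by blast
  finally show ?thesis .
qed

definition gate1 :: "(nat\<Rightarrow>nat) \<Rightarrow> nat \<Rightarrow> nat \<Rightarrow> nat \<Rightarrow> gate" where
 "gate1 p m n e = ({((\<Sum>r<m. if e div p 1 ^ m * m + r < n then dig (p 1) (e mod p 1 ^ m) r else 0) + p 1 - 1) mod p 1},
    \<lambda>j. if j div m = e div p 1 ^ m then dig (p 1) (e mod p 1 ^ m) (j mod m) else 0)"

definition gateK :: "(nat\<Rightarrow>nat) \<Rightarrow> nat \<Rightarrow> nat \<Rightarrow> nat \<Rightarrow> gate" where
 "gateK p m k e = ({p (k-1) ^ (m-1) mod p k},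
    \<lambda>e'. if e' div p (k-1) ^ m div m = e div p k ^ m then dig (p k) (e mod p k ^ m) (e' div p (k-1) ^ m mod m) else 0)"

definition topg :: gate where "topg = ({0}, \<lambda>_. 1)"

definition lev :: "(nat\<Rightarrow>nat) \<Rightarrow> nat \<Rightarrow> nat \<Rightarrow> nat \<Rightarrow> nat \<Rightarrow> gate list" where
  "lev p h m n k = (if k = h then [topg] else
     map (if k = 1 then gate1 p m n else gateK p m k) [0..<m^(h-1-k) * p k ^ m])"

fun vals :: "(nat\<Rightarrow>nat) \<Rightarrow> nat \<Rightarrow> nat \<Rightarrow> nat \<Rightarrow> bool list \<Rightarrow> nat \<Rightarrow> bool list" where
  "vals p h m n x 0 = x"
| "vals p h m n x (Suc k) = map (\<lambda>g. eval_gate (p (Suc k)) g (vals p h m n x k)) (lev p h m n (Suc k))"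

lemma eval_levels_append:
  "length ms1 = length C1 \<Longrightarrow> eval_levels (ms1 @ ms2) (C1 @ C2) v = eval_levels ms2 C2 (eval_levels ms1 C1 v)"
proof (induction ms1 arbitrary: C1 v)
  case Nil
  then show ?case by simp
next
  case (Cons a ms1)
  then obtain L C1' where "C1 = L # C1'" by (cases C1) auto
  with Cons show ?case by simp
qed

lemma evl: "eval_levels (map p [1..<k+1]) (map (lev p h m n) [1..<k+1]) x = vals p h m n x k"
proof (induction k)
  case 0
  then show ?case by simp
next
  case (Suc k)
  have "eval_levels (map p [1..<Suc k+1]) (map (lev p h m n) [1..<Suc k+1]) x
      = eval_levels [p (Suc k)] [lev p h m n (Suc k)] (eval_levels (map p [1..<k+1]) (map (lev p h m n) [1..<k+1]) x)"
    by (simp add: eval_levels_append)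
  also have "\<dots> = vals p h m n x (Suc k)" using Suc by simp
  finally show ?case .
qed

definition sem :: "(nat\<Rightarrow>nat) \<Rightarrow> nat \<Rightarrow> bool list \<Rightarrow> nat \<Rightarrow> nat \<Rightarrow> bool" where
  "sem p m x k e = ((\<Sum>r<m. dig (p k) (e mod p k ^ m) r * (if zz m x (k-1) (e div p k ^ m * m + r) then 1 else 0)) mod p k = 1)"

lemma sum_pad: "(n::nat) \<le> N \<Longrightarrow> (\<Sum>j<n. f j) = (\<Sum>j<N. if j < n then f j else (0::nat))"
proof -
  assume "n \<le> N"
  have "(\<Sum>j<N. if j < n then f j else 0) = sum f ({..<N} \<inter> {j. j < n})"
    using sum.inter_restrict[of "{..<N}" f "{j. j<n}"] by simp
  also have "{..<N} \<inter> {j. j < n} = {..<n}" using \<open>n \<le> N\<close> by auto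
  finally show ?thesis by simp
qed

lemma sum_delta_blocks:
  assumes "(b::nat) < M"
  shows "(\<Sum>b'<M. \<Sum>r<(K::nat). if b' = b then G r else (0::nat)) = (\<Sum>r<K. G r)"
proof -
  have "(\<Sum>b'<M. \<Sum>r<K. if b' = b then G r else (0::nat)) = (\<Sum>r<K. \<Sum>b'<M. if b' = b then G r else 0)"
    by (rule sum.swap)
  also have "\<dots> = (\<Sum>r<K. G r)"
  proof (rule sum.cong[OF refl])
    fix r show "(\<Sum>b'<M. if b' = b then G r else 0) = G r"
    proof -
      have "(\<Sum>b'<M. if b' = b then G r else 0) = (if b \<in> {..<M} then G r else 0)"
        by (rule sum.delta) simp
      then show ?thesis using assms by simp
    qed
  qed
  finally show ?thesis .
qed

lemma modlemma1:
  assumes "(Q::nat) \<ge> 2"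
  shows "(P mod Q = (P + Z + Q - 1) mod Q) \<longleftrightarrow> Z mod Q = 1"
proof -
  have e: "P + Z + Q - 1 = P + (Z + (Q - 1))" using assms by simp
  have "(P mod Q = (P + Z + Q - 1) mod Q) \<longleftrightarrow> [P + (Z + (Q-1)) = P] (mod Q)"
    unfolding e cong_def by auto
  also have "\<dots> \<longleftrightarrow> [Z + (Q-1) = 0] (mod Q)" by (rule cong_add_lcancel_0_nat)
  also have "\<dots> \<longleftrightarrow> [Z + (Q-1) = 1 + (Q-1)] (mod Q)" using assms by (simp add: cong_def)
  also have "\<dots> \<longleftrightarrow> [Z = 1] (mod Q)" by (rule cong_add_rcancel_nat)
  also have "\<dots> \<longleftrightarrow> Z mod Q = 1" using assms by (simp add: cong_def)
  finally show ?thesis .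
qed


lemma div_lt: "e < M * (K::nat) \<Longrightarrow> e div K < M"
  by (metis div_less_iff_less_mult mult.commute mult_zero_right not_less_zero zero_less_iff_neq_zero)

lemma level1:
  assumes Q2: "p 1 \<ge> 2" and m: "m > 0" and h2: "h \<ge> 2" and nm: "n \<le> m^(h-1)" and lx: "length x = n"
    and e: "e < m^(h-2) * p 1 ^ m"
  shows "eval_gate (p 1) (gate1 p m n e) x = sem p m x 1 e"
proof -
  define Q where "Q = p 1"
  define b where "b = e div Q^m"
  define c where "c = e mod Q^m"
  define M where "M = m^(h-2)"
  have bM: "b < M" unfolding b_def M_def Q_def using e by (rule div_lt)
  have hM: "m^(h-1) = M * m" unfolding M_def using h2
    by (metis Suc_diff_Suc Suc_1 diff_Suc_1 le_eq_less_or_eq less_eq_Suc_le power_Suc2)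
  define F where "F j = (if j div m = b then dig Q c (j mod m) else 0) * (if x!j then 1 else (0::nat))" for j
  define P where "P = (\<Sum>r<m. if b*m+r<n then dig Q c r * (if x!(b*m+r) then 1 else 0) else (0::nat))"
  define Z where "Z = (\<Sum>r<m. dig Q c r * (if zz m x 0 (b*m+r) then 1 else (0::nat)))"
  define S where "S = (\<Sum>r<m. if b*m+r<n then dig Q c r else (0::nat))"
  have S1: "(\<Sum>j<n. F j) = P"
  proof -
    have "(\<Sum>j<n. F j) = (\<Sum>j<M*m. if j<n then F j else 0)"
      using sum_pad[OF nm] hM by simp
    also have "\<dots> = (\<Sum>b'<M. \<Sum>r<m. if b'*m+r<n then F (b'*m+r) else 0)"
      by (rule sum_split)
    also have "\<dots> = (\<Sum>b'<M. \<Sum>r<m. if b' = b then (if b*m+r<n then dig Q c r * (if x!(b*m+r) then 1 else 0) else 0) else 0)"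
      by (intro sum.cong refl) (simp add: F_def m)
    also have "\<dots> = P" unfolding P_def by (rule sum_delta_blocks[OF bM])
    finally show ?thesis .
  qed
  have SPZ: "S = P + Z"
    unfolding S_def P_def Z_def zz_0 lx sum.distrib[symmetric] by (intro sum.cong refl) auto
  have g: "gate1 p m n e = ({(S + Q - 1) mod Q}, \<lambda>j. if j div m = b then dig Q c (j mod m) else 0)"
    unfolding gate1_def S_def Q_def b_def c_def by (rule refl)
  have "eval_gate (p 1) (gate1 p m n e) x = (P mod Q = (S + Q - 1) mod Q)"
    unfolding eval_gate_def g Q_def[symmetric] lx S1[symmetric] F_def by simp
  also have "\<dots> = (Z mod Q = 1)" unfolding SPZ using Q2 Q_def modlemma1 by simp
  also have "\<dots> = sem p m x 1 e" unfolding sem_def Z_def Q_def b_def c_def by simp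
  finally show ?thesis .
qed


lemma divmod_blk: "(xa::nat) < K \<Longrightarrow> (b*K + xa) div K = b" "(xa::nat) < K \<Longrightarrow> (b*K + xa) mod K = xa"
  by auto

lemma levelK:
  assumes Q2: "p k \<ge> 2" "p (Suc k) \<ge> 2" and cop: "coprime (p k ^ (m-1)) (p (Suc k))"
    and m: "m > 0" and k1: "k \<ge> 1" and kh: "Suc k \<le> h - 1"
    and len: "length v = m^(h-1-k) * p k ^ m" and IH: "\<forall>e'<length v. v!e' = sem p m x k e'"
    and e: "e < m^(h-1-Suc k) * p (Suc k) ^ m"
  shows "eval_gate (p (Suc k)) (gateK p m (Suc k) e) v = sem p m x (Suc k) e"
proof -
  define Q where "Q = p (Suc k)"
  define Q' where "Q' = p k"
  define T where "T = Q'^(m-1)"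
  define K where "K = Q'^m"
  define b where "b = e div Q^m"
  define c where "c = e mod Q^m"
  define M where "M = m^(h-1-Suc k)"
  have K0: "K > 0" unfolding K_def Q'_def using Q2 by simp
  have bM: "b < M" unfolding b_def M_def Q_def using e by (rule div_lt)
  have hM: "m^(h-1-k) = M * m" unfolding M_def using kh
    by (metis Suc_diff_Suc Suc_le_lessD power_Suc2)
  define W where "W b' = (if b' div m = b then dig Q c (b' mod m) else 0)" for b'
  define Z where "Z = (\<Sum>r<m. dig Q c r * (if zz m x k (b*m+r) then 1 else (0::nat)))"
  have gk: "gateK p m (Suc k) e = ({T mod Q}, \<lambda>e'. W (e' div K))"
    unfolding gateK_def diff_Suc_1 W_def T_def Q_def Q'_def K_def b_def c_def by simp
  have cnt: "(\<Sum>c'<K. if sem p m x k (b'*K + c') then 1 else 0) = (if zz m x k b' then T else (0::nat))" for b'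
  proof -
    have "(\<Sum>c'<K. if sem p m x k (b'*K + c') then 1 else (0::nat)) =
        (\<Sum>c'<Q'^m. if (\<Sum>r<m. dig Q' c' r * (if zz m x (k-1) (b'*m+r) then 1 else 0)) mod Q' = 1 then 1 else 0)"
      unfolding K_def by (intro sum.cong refl) (simp add: sem_def Q'_def divmod_blk)
    also have "\<dots> = (if \<exists>r<m. zz m x (k-1) (b'*m+r) then Q'^(m-1) else 0)"
      using count[where Q=Q' and a=1 and m=m and y="\<lambda>r. zz m x (k-1) (b'*m+r)"] Q2 unfolding Q'_def by simp
    also have "(\<exists>r<m. zz m x (k-1) (b'*m+r)) = zz m x k b'"
      using zz_Suc[OF m, of x "k-1" b'] k1 by simp
    finally show ?thesis unfolding T_def .
  qed
  have sum: "(\<Sum>e'<length v. W (e' div K) * (if v!e' then 1 else 0)) = T * Z"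
  proof -
    have "(\<Sum>e'<length v. W (e' div K) * (if v!e' then 1 else 0)) =
          (\<Sum>e'<(M*m)*K. W (e' div K) * (if sem p m x k e' then 1 else 0))"
      using IH unfolding len hM K_def Q'_def by (intro sum.cong refl) auto
    also have "\<dots> = (\<Sum>b'<M*m. \<Sum>c'<K. W b' * (if sem p m x k (b'*K+c') then 1 else 0))"
      unfolding sum_split using K0 by simp
    also have "\<dots> = (\<Sum>b'<M*m. W b' * (if zz m x k b' then T else 0))"
      by (simp add: sum_distrib_left[symmetric] cnt)
    also have "\<dots> = (\<Sum>b''<M. \<Sum>r<m. W (b''*m+r) * (if zz m x k (b''*m+r) then T else 0))"
      by (rule sum_split)
    also have "\<dots> = (\<Sum>b''<M. \<Sum>r<m. if b'' = b then dig Q c r * (if zz m x k (b*m+r) then T else 0) else 0)"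
      by (intro sum.cong refl) (simp add: W_def m)
    also have "\<dots> = (\<Sum>r<m. dig Q c r * (if zz m x k (b*m+r) then T else 0))"
      by (rule sum_delta_blocks[OF bM])
    also have "\<dots> = T * Z" unfolding Z_def sum_distrib_left by (intro sum.cong refl) auto
    finally show ?thesis .
  qed
  have copT: "coprime T Q" using cop unfolding T_def Q'_def Q_def .
  have "eval_gate (p (Suc k)) (gateK p m (Suc k) e) v = ((T * Z) mod Q = T mod Q)"
    unfolding eval_gate_def gk Q_def[symmetric] using sum by simp
  also have "\<dots> = [T * Z = T * 1] (mod Q)" by (simp add: cong_def)
  also have "\<dots> = [Z = 1] (mod Q)" using copT by (rule cong_mult_lcancel_nat)
  also have "\<dots> = (Z mod Q = 1)" using Q2 unfolding Q_def by (simp add: cong_def)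
  also have "\<dots> = sem p m x (Suc k) e" unfolding sem_def Z_def Q_def b_def c_def by simp
  finally show ?thesis .
qed


definition circ :: "(nat\<Rightarrow>nat) \<Rightarrow> nat \<Rightarrow> nat \<Rightarrow> nat \<Rightarrow> gate list list" where
  "circ p h m n = map (lev p h m n) [1..<h+1]"

lemma levels:
  assumes pr: "\<forall>i\<in>{1..h}. prime (p i)" and ne: "\<forall>i\<in>{1..<h}. p i \<noteq> p (i+1)"
    and m: "m > 0" and h2: "h \<ge> 2" and nm: "n \<le> m^(h-1)" and lx: "length x = n"
  shows "1 \<le> k \<Longrightarrow> k \<le> h-1 \<Longrightarrow> length (vals p h m n x k) = m^(h-1-k) * p k ^ m \<and>
     (\<forall>e < m^(h-1-k) * p k ^ m. vals p h m n x k ! e = sem p m x k e)"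
proof (induction k)
  case 0
  then show ?case by simp
next
  case (Suc k)
  have pk: "prime (p (Suc k))" using pr Suc.prems by auto
  then have Q2: "p (Suc k) \<ge> 2" by (rule prime_ge_2_nat)
  have nh: "Suc k \<noteq> h" using Suc.prems h2 by auto
  show ?case
  proof (cases "k = 0")
    case True
    have l: "lev p h m n (Suc k) = map (gate1 p m n) [0..<m^(h-1-1) * p 1 ^ m]"
      unfolding lev_def using nh True by simp
    have "length (vals p h m n x (Suc k)) = m^(h-1-Suc k) * p (Suc k) ^ m" using l True by simp
    moreover have "\<forall>e < m^(h-1-Suc k) * p (Suc k) ^ m. vals p h m n x (Suc k) ! e = sem p m x (Suc k) e"
    proof (intro allI impI)
      fix e assume e: "e < m^(h-1-Suc k) * p (Suc k) ^ m"
      have "vals p h m n x (Suc k) ! e = eval_gate (p 1) (gate1 p m n e) x"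
        using l True e by simp
      also have "\<dots> = sem p m x 1 e"
        using level1[of p m h n x e] Q2 True m h2 nm lx e by (simp add: numeral_2_eq_2)
      finally show "vals p h m n x (Suc k) ! e = sem p m x (Suc k) e" using True by simp
    qed
    ultimately show ?thesis by blast
  next
    case False
    then have k1: "k \<ge> 1" by simp
    have IH: "length (vals p h m n x k) = m^(h-1-k) * p k ^ m \<and>
       (\<forall>e < m^(h-1-k) * p k ^ m. vals p h m n x k ! e = sem p m x k e)"
      using Suc.IH k1 Suc.prems by simp
    have pk': "prime (p k)" using pr Suc.prems k1 by auto
    then have Q2': "p k \<ge> 2" by (rule prime_ge_2_nat)
    have "p k \<noteq> p (Suc k)" using ne k1 Suc.prems h2 by auto
    then have "coprime (p k) (p (Suc k))" using pk pk' by (simp add: primes_coprime)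
    then have cop: "coprime (p k ^ (m-1)) (p (Suc k))" by simp
    have l: "lev p h m n (Suc k) = map (gateK p m (Suc k)) [0..<m^(h-1-Suc k) * p (Suc k) ^ m]"
      unfolding lev_def using nh k1 by simp
    have "length (vals p h m n x (Suc k)) = m^(h-1-Suc k) * p (Suc k) ^ m" using l by simp
    moreover have "\<forall>e < m^(h-1-Suc k) * p (Suc k) ^ m. vals p h m n x (Suc k) ! e = sem p m x (Suc k) e"
    proof (intro allI impI)
      fix e assume e: "e < m^(h-1-Suc k) * p (Suc k) ^ m"
      have "vals p h m n x (Suc k) ! e = eval_gate (p (Suc k)) (gateK p m (Suc k) e) (vals p h m n x k)"
        using l e by simp
      also have "\<dots> = sem p m x (Suc k) e"
        by (rule levelK[OF Q2' Q2 cop m k1 _ _ _ e]) (use IH Suc.prems in auto)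
      finally show "vals p h m n x (Suc k) ! e = sem p m x (Suc k) e" .
    qed
    ultimately show ?thesis by blast
  qed
qed


lemma correct:
  assumes pr: "\<forall>i\<in>{1..h}. prime (p i)" and ne: "\<forall>i\<in>{1..<h}. p i \<noteq> p (i+1)"
    and m: "m > 0" and h2: "h \<ge> 2" and nm: "n \<le> m^(h-1)" and lx: "length x = n"
  shows "circuit_output (map p [1..<h+1]) (circ p h m n) x = (\<forall>b\<in>set x. b)"
proof -
  define Q where "Q = p (h-1)"
  define v where "v = vals p h m n x (h-1)"
  have pQ: "prime Q" unfolding Q_def using pr h2 by auto
  have ph: "prime (p h)" using pr h2 by auto
  have Q2: "Q \<ge> 2" using pQ by (rule prime_ge_2_nat)
  have neq: "p h \<noteq> Q"
  proof -
    have "h-1 \<in> {1..<h}" using h2 by auto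
    then have "p (h-1) \<noteq> p (h-1+1)" using ne by blast
    moreover have "h-1+1 = h" using h2 by simp
    ultimately show ?thesis unfolding Q_def by simp
  qed
  have L: "length v = Q^m" "\<forall>e<Q^m. v ! e = sem p m x (h-1) e"
    using levels[OF pr ne m h2 nm lx, of "h-1"] h2 unfolding v_def Q_def by auto
  have hS: "h = Suc (h-1)" using h2 by simp
  have vh: "vals p h m n x h = [eval_gate (p h) topg v]"
  proof -
    have "vals p h m n x (Suc (h-1)) = map (\<lambda>g. eval_gate (p (Suc (h-1))) g (vals p h m n x (h-1))) (lev p h m n (Suc (h-1)))"
      by (rule vals.simps(2))
    then show ?thesis unfolding hS[symmetric] v_def lev_def by simp
  qed
  have co: "circuit_output (map p [1..<h+1]) (circ p h m n) x = eval_gate (p h) topg v"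
    unfolding circuit_output_def circ_def evl vh by simp
  have hm2: "h-1-1 = h-2" by simp
  have hS2: "Suc (h-2) = h-1" using h2 by simp
  have "(\<Sum>j<length v. 1 * (if v ! j then 1 else (0::nat))) =
     (\<Sum>j<Q^m. if (\<Sum>r<m. dig Q j r * (if zz m x (h-2) r then 1 else 0)) mod Q = 1 then 1 else 0)"
    unfolding L(1)
  proof (rule sum.cong[OF refl])
    fix j assume j: "j \<in> {..<Q^m}"
    have "v!j = sem p m x (h-1) j" using L(2) j by simp
    also have "\<dots> = ((\<Sum>r<m. dig Q j r * (if zz m x (h-2) r then 1 else 0)) mod Q = 1)"
      unfolding sem_def Q_def[symmetric] hm2 using j by simp
    finally show "1 * (if v ! j then 1 else (0::nat)) = (if (\<Sum>r<m. dig Q j r * (if zz m x (h-2) r then 1 else 0)) mod Q = 1 then 1 else 0)"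
      by simp
  qed
  also have "\<dots> = (if \<exists>r<m. zz m x (h-2) r then Q^(m-1) else 0)"
    using count[where Q=Q and a=1 and m=m and y="\<lambda>r. zz m x (h-2) r"] Q2 by simp
  also have "(\<exists>r<m. zz m x (h-2) r) = zz m x (h-1) 0"
    using zz_Suc[OF m, of x "h-2" 0] unfolding hS2 by simp
  also have "zz m x (h-1) 0 = (\<exists>j<n. \<not> x ! j)"
  proof -
    have "j div m^(h-1) = 0" if "j < n" for j using that nm by (simp add: div_less)
    then show ?thesis unfolding zz_def lx by auto
  qed
  finally have sm: "(\<Sum>j<length v. 1 * (if v ! j then 1 else (0::nat))) = (if \<exists>j<n. \<not> x ! j then Q^(m-1) else 0)" .
  have nd: "\<not> (Q^(m-1) mod p h = 0)"
  proof
    assume "Q^(m-1) mod p h = 0"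
    then have "p h dvd Q^(m-1)" by auto
    then have "p h dvd Q" by (rule prime_dvd_power[OF ph])
    then have "p h = Q" by (rule primes_dvd_imp_eq[OF ph pQ])
    with neq show False by simp
  qed
  have "eval_gate (p h) topg v = (\<not> (\<exists>j<n. \<not> x ! j))"
    unfolding eval_gate_def topg_def using sm nd by simp
  also have "\<dots> = (\<forall>b\<in>set x. b)" unfolding all_set_conv_all_nth lx by blast
  finally show ?thesis unfolding co .
qed


lemma circ_CC:
  assumes pr: "\<forall>i\<in>{1..h}. prime (p i)" and m: "m > 0" and h2: "h \<ge> 2"
  shows "is_CC_circuit (map p [1..<h+1]) (circ p h m n)"
proof -
  have pos: "p i > 0" if "i \<in> {1..h}" for i using pr that prime_gt_0_nat by blast
  have A: "lev p h m n (Suc i) \<noteq> [] \<and> (\<forall>g\<in>set (lev p h m n (Suc i)). fst g \<subseteq> {..<p (Suc i)})" if i: "i < h" for i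
  proof -
    have pi: "p (Suc i) > 0" using pos i by simp
    show ?thesis
    proof (cases "Suc i = h")
      case True
      then show ?thesis unfolding lev_def topg_def using pi by simp
    next
      case False
      have "m^(h-1-Suc i) * p (Suc i) ^ m > 0" using m pi by simp
      then show ?thesis unfolding lev_def using False pi
        by (auto simp: gate1_def gateK_def)
    qed
  qed
  have len: "length [1..<h+1] = h" by simp
  have nth: "map (lev p h m n) [1..<h+1] ! i = lev p h m n (Suc i)" "map p [1..<h+1] ! i = p (Suc i)"
    if "i < h" for i using that by (simp_all del: upt_Suc add: nth_upt)
  have ne: "[1..<h+1] \<noteq> []" using h2 by (simp del: upt_Suc)
  have lst: "last [1..<h+1] = h" using h2 by (simp del: upt_Suc add: last_upt)
  have "last (map (lev p h m n) [1..<h+1]) = lev p h m n h"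
    using last_map[OF ne, of "lev p h m n"] lst by simp
  then have "length (last (map (lev p h m n) [1..<h+1])) = 1" by (simp add: lev_def)
  moreover have "map (lev p h m n) [1..<h+1] \<noteq> []" using ne by simp
  moreover have "length (map (lev p h m n) [1..<h+1]) = length (map p [1..<h+1])" by simp
  moreover have "\<forall>i<length (map (lev p h m n) [1..<h+1]). map (lev p h m n) [1..<h+1] ! i \<noteq> [] \<and>
      (\<forall>g\<in>set (map (lev p h m n) [1..<h+1] ! i). fst g \<subseteq> {..<map p [1..<h+1] ! i})"
    using A nth len by (simp del: upt_Suc)
  ultimately show ?thesis unfolding is_CC_circuit_def circ_def by blast
qed

lemma sum_list_bound: "(\<forall>y\<in>set xs. f y \<le> (B::nat)) \<Longrightarrow> sum_list (map f xs) \<le> length xs * B"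
  by (induction xs) auto

lemma circ_size:
  assumes m: "m > 0" and P: "\<forall>i\<in>{1..h}. p i \<le> P" and P1: "P \<ge> 1"
  shows "circuit_size (circ p h m n) \<le> h * (m^h * P^m)"
proof -
  have "length (lev p h m n k) \<le> m^h * P^m" if k: "k \<in> set [1..<h+1]" for k
  proof (cases "k = h")
    case True
    have "1 \<le> m^h * P^m" using m P1 by simp
    then show ?thesis using True by (simp add: lev_def)
  next
    case False
    have "m^(h-1-k) \<le> m^h" using m by (intro power_increasing) auto
    moreover have "p k ^ m \<le> P^m" using P k by (intro power_mono) auto
    ultimately have "m^(h-1-k) * p k ^ m \<le> m^h * P^m" by (rule mult_le_mono)
    then show ?thesis using False by (simp add: lev_def)
  qed
  then have "sum_list (map (length \<circ> lev p h m n) [1..<h+1]) \<le> length [1..<h+1] * (m^h * P^m)"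
    by (intro sum_list_bound) simp
  moreover have "circuit_size (circ p h m n) = sum_list (map (length \<circ> lev p h m n) [1..<h+1])"
    unfolding circuit_size_def circ_def map_map by (rule refl)
  moreover have "length [1..<h+1] = h" by simp
  ultimately show ?thesis by simp
qed

lemma nat_bound:
  assumes "m \<ge> (1::nat)"
  shows "h * (m^h * P^m) \<le> 2^((2*h+P)*m)"
proof -
  have a: "h \<le> 2^(h*m)"
  proof -
    have "h \<le> 2^h" using less_exp[of h] by simp
    also have "\<dots> \<le> 2^(h*m)" using assms by (intro power_increasing) auto
    finally show ?thesis .
  qed
  have b: "m^h \<le> 2^(h*m)"
  proof -
    have "m^h \<le> (2^m)^h" using less_exp[of m] by (intro power_mono) auto
    then show ?thesis by (simp add: power_mult[symmetric] mult.commute)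
  qed
  have c: "P^m \<le> 2^(P*m)"
  proof -
    have "P^m \<le> (2^P)^m" using less_exp[of P] by (intro power_mono) auto
    then show ?thesis by (simp add: power_mult[symmetric])
  qed
  have "h * (m^h * P^m) \<le> 2^(h*m) * (2^(h*m) * 2^(P*m))"
    using a b c by (intro mult_le_mono) auto
  also have "\<dots> = 2^((2*h+P)*m)" by (simp add: power_add[symmetric] algebra_simps)
  finally show ?thesis .
qed


theorem proposition4p2:
  fixes h :: nat and p :: "nat \<Rightarrow> nat"
  assumes "h \<ge> 2"
    and "\<forall>i\<in>{1..h}. prime (p i)"
    and "\<forall>i\<in>{1..<h}. p i \<noteq> p (i + 1)"
  shows "\<exists>c::real. c > 0 \<and> (\<exists>N::nat. \<forall>n\<ge>N. \<exists>C.
           is_CC_circuit (map p [1..<h+1]) C \<and> computes_AND (map p [1..<h+1]) C n \<and>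
           real (circuit_size C) \<le> 2 powr (c * real n powr (1 / real (h - 1))))"
proof -
  note h2 = assms(1) and pr = assms(2) and ne = assms(3)
  define P where "P = (\<Sum>i\<in>{1..h}. p i)"
  have Pb: "\<forall>i\<in>{1..h}. p i \<le> P" unfolding P_def by (auto intro: member_le_sum)
  have "p 1 \<ge> 2" using pr h2 prime_ge_2_nat by auto
  moreover have "p 1 \<le> P" using Pb h2 by auto
  ultimately have P1: "P \<ge> 1" by simp
  define K where "K = 2*h + P"
  have K0: "real K > 0" unfolding K_def using h2 by simp
  show ?thesis
  proof (intro exI[of _ "2 * real K"] conjI exI[of _ "1::nat"] allI impI)
    show "2 * real K > 0" using K0 by simp
    fix n :: nat assume n1: "n \<ge> 1"
    define y where "y = real n powr (1 / real (h-1))"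
    have y1: "y \<ge> 1" unfolding y_def using n1 by (intro ge_one_powr_ge_zero) auto
    define m where "m = nat \<lceil>y\<rceil>"
    have my: "y \<le> real m" unfolding m_def by (rule real_nat_ceiling_ge)
    have my2: "real m < y + 1" unfolding m_def using y1 by linarith
    have m1: "m \<ge> 1" using my y1 by linarith
    have yD: "y ^ (h-1) = real n"
    proof -
      have "y ^ (h-1) = y powr real (h-1)" using y1 by (simp add: powr_realpow)
      also have "\<dots> = real n powr (1 / real (h-1) * real (h-1))" unfolding y_def by (rule powr_powr)
      also have "1 / real (h-1) * real (h-1) = 1" using h2 by simp
      finally show ?thesis using n1 by simp
    qed
    have "real n \<le> real m ^ (h-1)" unfolding yD[symmetric] using y1 my by (intro power_mono) auto
    then have nm: "n \<le> m^(h-1)" by (metis of_nat_le_iff of_nat_power)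
    have m0: "m > 0" using m1 by simp
    have comp: "computes_AND (map p [1..<h+1]) (circ p h m n) n"
      unfolding computes_AND_def using correct[OF pr ne m0 h2 nm] by blast
    have "circuit_size (circ p h m n) \<le> h * (m^h * P^m)" using circ_size[OF m0 Pb P1] .
    also have "\<dots> \<le> 2^(K*m)" unfolding K_def using nat_bound[OF m1] .
    finally have "real (circuit_size (circ p h m n)) \<le> real (2^(K*m))" by (rule of_nat_mono)
    also have "\<dots> = 2 powr real (K*m)" by (subst powr_realpow) simp_all
    also have "\<dots> \<le> 2 powr (2 * real K * y)"
    proof (rule powr_mono)
      have "real (K*m) = real K * real m" by simp
      also have "\<dots> \<le> real K * (2*y)" using my2 y1 K0 by (intro mult_left_mono) auto
      finally show "real (K*m) \<le> 2 * real K * y" by simp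
    qed simp
    finally show "\<exists>C. is_CC_circuit (map p [1..<h+1]) C \<and> computes_AND (map p [1..<h+1]) C n \<and>
           real (circuit_size C) \<le> 2 powr (2 * real K * real n powr (1 / real (h - 1)))"
      using circ_CC[OF pr m0 h2, of n] comp unfolding y_def by blast
  qed
qed


end
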